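(* For every $\varepsilon>0$ there is a constant $C_\varepsilon>0$ such that for every positive integer $n$ with $s=\omega(n)\ge 2$, \[ d(n)\le C_\varepsilon\left(\frac{(2+\varepsilon)\log n}{s\log s}\right)^{s}. \]
   Context: $d(n)$ is the number of positive divisors of $n$; $\omega(n)$ is the number of distinct prime factors of $n$. *)

theory Defs
  imports "HOL-Analysis.Analysis" "HOL-Computational_Algebra.Primes"
begin

definition num_divisors :: "nat \<Rightarrow> nat" where
  "num_divisors n = card {k. k dvd n}"

definition omega :: "nat \<Rightarrow> nat" where
  "omega n = card (prime_factors n)"

end

theory Submission
  imports Defs
begin
lemma amgm:
  fixes x :: "'a \<Rightarrow> real"
  assumes "finite S" "S \<noteq> {}" "\<And>i. i \<in> S \<Longrightarrow> x i \<ge> 0"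
  shows "(\<Prod>i\<in>S. x i) \<le> ((\<Sum>i\<in>S. x i) / card S) ^ card S"
proof -
  have k: "card S > 0" using assms by (simp add: card_gt_0_iff)
  have G: "(\<Prod>i\<in>S. x i) \<ge> 0" using assms by (simp add: prod_nonneg)
  have "(\<Prod>i \<in> S. x i) powr (1 / card S) \<le> (\<Sum>i \<in> S. x i / card S)"
    by (rule arith_geom_mean[OF assms])
  also have "\<dots> = (\<Sum>i\<in>S. x i) / card S" by (simp add: sum_divide_distrib)
  finally have h: "(\<Prod>i \<in> S. x i) powr (1 / card S) \<le> (\<Sum>i\<in>S. x i) / card S" .
  have "(\<Prod>i\<in>S. x i) = ((\<Prod>i \<in> S. x i) powr (1 / card S)) ^ card S"
  proof (cases "(\<Prod>i\<in>S. x i) = 0")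
    case True then show ?thesis using k by simp
  next
    case False then show ?thesis using k G by (simp add: powr_power)
  qed
  also have "\<dots> \<le> ((\<Sum>i\<in>S. x i) / card S) ^ card S"
    by (rule power_mono[OF h]) simp
  finally show ?thesis .
qed

lemma divbound:
  assumes "n > (0::nat)"
  shows "num_divisors n \<le> (\<Prod>p\<in>prime_factors n. multiplicity p n + 1)"
proof -
  define P where "P = prime_factors n"
  define f where "f = (\<lambda>d. restrict (\<lambda>p. multiplicity p d) P)"
  have inj: "inj_on f {d. d dvd n}"
  proof (rule inj_onI)
    fix d1 d2 assume d1: "d1 \<in> {d. d dvd n}" and d2: "d2 \<in> {d. d dvd n}" and e: "f d1 = f d2"
    have nz: "d1 \<noteq> 0" "d2 \<noteq> 0" using d1 d2 assms by auto
    have "multiplicity p d1 = multiplicity p d2" if "prime p" for p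
    proof (cases "p \<in> P")
      case True then show ?thesis using fun_cong[OF e, of p] by (simp add: f_def)
    next
      case False
      then have "\<not> p dvd n" using that assms by (auto simp: P_def in_prime_factors_iff)
      then have "multiplicity p n = 0" by (simp add: not_dvd_imp_multiplicity_0)
      moreover have "multiplicity p d1 \<le> multiplicity p n" "multiplicity p d2 \<le> multiplicity p n"
        using d1 d2 assms by (auto intro!: dvd_imp_multiplicity_le)
      ultimately show ?thesis by simp
    qed
    then have "normalize d1 = normalize d2" using nz by (intro multiplicity_eq_imp_eq) auto
    then show "d1 = d2" by simp
  qed
  have sub: "f ` {d. d dvd n} \<subseteq> PiE P (\<lambda>p. {0..multiplicity p n})"
    using assms by (auto simp: f_def intro!: dvd_imp_multiplicity_le)
  have "num_divisors n = card (f ` {d. d dvd n})"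
    unfolding num_divisors_def using inj by (simp add: card_image)
  also have "\<dots> \<le> card (PiE P (\<lambda>p. {0..multiplicity p n}))"
    by (rule card_mono[OF _ sub]) (simp add: P_def finite_PiE)
  also have "\<dots> = (\<Prod>p\<in>P. multiplicity p n + 1)"
    by (simp add: card_PiE P_def)
  finally show ?thesis by (simp add: P_def)
qed

lemma lnn:
  assumes "n > (0::nat)"
  shows "ln (real n) = (\<Sum>p\<in>prime_factors n. real (multiplicity p n) * ln (real p))"
proof -
  have "real n = (\<Prod>p\<in>prime_factors n. real p ^ multiplicity p n)"
    by (subst prime_factorization_nat[OF assms]) simp
  then have "ln (real n) = (\<Sum>p\<in>prime_factors n. ln (real p ^ multiplicity p n))"
    by (simp only:) (subst ln_prod, auto simp: in_prime_factors_iff prime_gt_0_nat)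
  also have "\<dots> = (\<Sum>p\<in>prime_factors n. real (multiplicity p n) * ln (real p))"
    by (intro sum.cong refl) (simp add: ln_realpow prime_gt_0_nat)
  finally show ?thesis .
qed
lemma large_aux:
  fixes t u a :: real and N :: nat
  assumes u: "u > 0" and tu: "t + 2*u = 1" and t: "t > 0" and a: "a > 0"
    and N: "N = nat \<lceil>(2/(u*a)) powr (1/u)\<rceil> + 2" and s: "s \<ge> N"
  shows "(real s powr t + 1) * ln (real s) \<le> a * real s"
proof -
  have s2: "real s \<ge> 2" using s N by simp
  have "real s \<ge> (2/(u*a)) powr (1/u)" using s N by linarith
  then have "real s powr u \<ge> ((2/(u*a)) powr (1/u)) powr u"
    using u by (intro powr_mono2) auto
  also have "((2/(u*a)) powr (1/u)) powr u = 2/(u*a)"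
    using u a by (simp add: powr_powr)
  finally have su: "real s powr u \<ge> 2/(u*a)" .
  have "u * ln (real s) = ln (real s powr u)" using s2 by (simp add: ln_powr)
  also have "\<dots> \<le> real s powr u - 1" using s2 by (intro ln_le_minus_one) simp
  finally have lnle: "ln (real s) \<le> real s powr u / u" using u by (simp add: field_simps)
  have st1: "real s powr t \<ge> 1" using s2 t by (intro ge_one_powr_ge_zero) auto
  have ln0: "ln (real s) \<ge> 0" using s2 by simp
  have "(real s powr t + 1) * ln (real s) \<le> (2 * real s powr t) * (real s powr u / u)"
    using st1 ln0 lnle by (intro mult_mono) auto
  also have "\<dots> = 2 * real s powr (t+u) / u" by (simp add: powr_add)
  also have "\<dots> \<le> a * real s powr (t+u) * real s powr u"
  proof -
    have "2/u \<le> a * real s powr u" using su u a by (simp add: field_simps)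
    then have "(2/u) * real s powr (t+u) \<le> (a * real s powr u) * real s powr (t+u)"
      by (intro mult_right_mono) auto
    then show ?thesis by (simp add: field_simps)
  qed
  also have "\<dots> = a * real s powr (t + u + u)" by (simp only: powr_add mult.assoc)
  also have "\<dots> = a * real s" using tu s2 by (simp add: algebra_simps)
  finally show ?thesis .
qed

lemma lnprod_lower:
  assumes r: "0 < r" "r < 1"
  shows "\<exists>C>0. \<forall>P::nat set. finite P \<longrightarrow> (\<forall>p\<in>P. prime p) \<longrightarrow> card P \<ge> 2 \<longrightarrow>
     (r * ln (real (card P))) ^ card P \<le> C * (\<Prod>p\<in>P. ln (real p))"
proof -
  define t where "t = (1+r)/2"
  define u where "u = (1-t)/2"
  define a where "a = ln (t/r)"
  have t: "r < t" "t < 1" "1/2 < t" using r by (auto simp: t_def)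
  have u: "u > 0" "t + 2*u = 1" using t by (auto simp: u_def field_simps)
  have a: "a > 0" using t r by (auto simp: a_def)
  define N :: nat where "N = nat \<lceil>(2/(u*a)) powr (1/u)\<rceil> + 2"
  have N2: "N \<ge> 2" by (simp add: N_def)
  define C where "C = (real N / ln 2) ^ N"
  have ln2: "0 < ln (2::real)" "ln (2::real) < 1" using ln_2_less_1 by auto
  have C1: "C \<ge> 1" unfolding C_def
    using N2 ln2 by (intro one_le_power) (simp add: field_simps)
  show ?thesis
  proof (intro exI[of _ C] conjI allI impI)
    show "C > 0" using C1 by simp
    fix P :: "nat set"
    assume fin: "finite P" and pr: "\<forall>p\<in>P. prime p" and card2: "card P \<ge> 2"
    define s where "s = card P"
    have s2: "real s \<ge> 2" using card2 by (simp add: s_def)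
    have lnp: "ln 2 \<le> ln (real p)" if "p \<in> P" for p
      using pr that prime_ge_2_nat[of p] by simp
    have lnp0: "0 \<le> ln (real p)" if "p \<in> P" for p
      using lnp[OF that] ln2(1) by linarith
    have Pi0: "0 \<le> (\<Prod>p\<in>P. ln (real p))" using lnp0 by (simp add: prod_nonneg)
    have lns: "ln (real s) \<le> real s"
      using s2 ln_le_minus_one[of "real s"] by simp
    show "(r * ln (real (card P))) ^ card P \<le> C * (\<Prod>p\<in>P. ln (real p))"
    proof (cases "s < N")
      case True
      have "(r * ln (real s)) ^ s \<le> real N ^ s"
      proof (rule power_mono)
        have l0: "0 \<le> ln (real s)" using s2 by simp
        show "0 \<le> r * ln (real s)" using r l0 by simp
        have "r * ln (real s) \<le> ln (real s)" using r l0 by (intro mult_left_le_one_le) auto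
        also have "\<dots> \<le> real s" by (rule lns)
        also have "\<dots> \<le> real N" using True by simp
        finally show "r * ln (real s) \<le> real N" .
      qed
      also have "\<dots> \<le> real N ^ N" using True N2 by (intro power_increasing) auto
      also have "\<dots> = C * ln 2 ^ N" using ln2 by (simp add: C_def power_divide)
      also have "\<dots> \<le> C * ln 2 ^ s" using True ln2 C1
        by (intro mult_left_mono power_decreasing) auto
      also have "ln 2 ^ s = (\<Prod>p\<in>P. ln (2::real))" by (simp add: s_def)
      also have "C * \<dots> \<le> C * (\<Prod>p\<in>P. ln (real p))"
        using C1 lnp ln2 by (intro mult_left_mono prod_mono) auto
      finally show ?thesis by (simp add: s_def)
    next
      case False
      then have sN: "s \<ge> N" by simp
      have big: "(real s powr t + 1) * ln (real s) \<le> a * real s"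
        by (rule large_aux[OF u(1) u(2) _ a N_def sN]) (use t in auto)
      define x where "x = real s powr t"
      define S where "S = {p\<in>P. real p < x}"
      define m where "m = card S"
      have SP: "S \<subseteq> P" by (auto simp: S_def)
      have finS: "finite S" using fin SP by (rule finite_subset[rotated])
      have x0: "x \<ge> 0" by (simp add: x_def)
      have "S \<subseteq> {..< nat \<lceil>x\<rceil>}"
      proof
        fix p assume "p \<in> S"
        then have "of_int (int p) < x" by (simp add: S_def)
        then have "int p < \<lceil>x\<rceil>" by (simp only: less_ceiling_iff)
        then show "p \<in> {..< nat \<lceil>x\<rceil>}" by simp
      qed
      then have "card S \<le> card {..< nat \<lceil>x\<rceil>}" by (intro card_mono) simp_all
      then have "m \<le> nat \<lceil>x\<rceil>" unfolding m_def by simp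
      then have mx: "real m \<le> x + 1" using x0 by linarith
      have cardB: "card (P - S) = s - m" using fin SP by (simp add: card_Diff_subset finS m_def s_def)
      have lnx: "ln x = t * ln (real s)" using s2 by (simp add: x_def ln_powr)
      define L where "L = t * ln (real s)"
      have L0: "L > 0" using s2 t by (simp add: L_def)
      have split: "(\<Prod>p\<in>P. ln (real p)) = (\<Prod>p\<in>P - S. ln (real p)) * (\<Prod>p\<in>S. ln (real p))"
        by (rule prod.subset_diff[OF SP fin])
      have pS: "ln 2 ^ m \<le> (\<Prod>p\<in>S. ln (real p))"
      proof -
        have "ln 2 ^ m = (\<Prod>p\<in>S. ln (2::real))" by (simp add: m_def)
        also have "\<dots> \<le> (\<Prod>p\<in>S. ln (real p))"
        proof (rule prod_mono)
          fix p assume "p \<in> S"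
          then have "p \<in> P" using SP by blast
          then show "0 \<le> ln (2::real) \<and> ln 2 \<le> ln (real p)" using lnp ln2(1) by simp
        qed
        finally show ?thesis .
      qed
      have pB: "L ^ (s - m) \<le> (\<Prod>p\<in>P - S. ln (real p))"
      proof -
        have "L ^ (s - m) = (\<Prod>p\<in>P - S. L)" by (simp add: cardB)
        also have "\<dots> \<le> (\<Prod>p\<in>P - S. ln (real p))"
        proof (intro prod_mono conjI)
          fix p assume p: "p \<in> P - S"
          show "0 \<le> L" using L0 by simp
          have "x \<le> real p" using p by (simp add: S_def not_less)
          moreover have "x > 0" using s2 by (simp add: x_def)
          ultimately have "ln x \<le> ln (real p)" by simp
          then show "L \<le> ln (real p)" using lnx by (simp add: L_def)
        qed
        finally show ?thesis .
      qed
      define y where "y = L / ln 2"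
      have y0: "y \<ge> 0" using L0 ln2 by (simp add: y_def)
      have ys: "y \<le> real s"
      proof -
        have "real s < real ((2::nat) ^ s)" using less_exp[of s] by (simp only: of_nat_less_iff)
        then have "real s \<le> 2 ^ s" by simp
        then have "ln (real s) \<le> ln (2 ^ s)" using s2 by simp
        then have "ln (real s) \<le> real s * ln 2" by (simp add: ln_realpow)
        moreover have "L \<le> ln (real s)" unfolding L_def
          using t s2 by (intro mult_left_le_one_le) auto
        ultimately have "L \<le> real s * ln 2" by linarith
        then show ?thesis using ln2 by (simp add: y_def field_simps)
      qed
      have key: "y ^ m \<le> (t/r) ^ s"
      proof -
        have "y ^ m \<le> real s ^ m" using y0 ys by (intro power_mono) auto
        also have "\<dots> = exp (real m * ln (real s))" using s2 by (simp add: exp_of_nat_mult)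
        also have "\<dots> \<le> exp (a * real s)"
        proof -
          have "real m * ln (real s) \<le> (x + 1) * ln (real s)"
            using mx s2 by (intro mult_right_mono) auto
          also have "\<dots> \<le> a * real s" using big by (simp add: x_def)
          finally show ?thesis by simp
        qed
        also have "\<dots> = exp (real s * a)" by (simp add: mult.commute)
        also have "\<dots> = exp a ^ s" by (rule exp_of_nat_mult)
        also have "\<dots> = (t/r) ^ s" using t r by (simp add: a_def)
        finally show ?thesis .
      qed
      have "(r * ln (real s)) ^ s * (t/r) ^ s = L ^ s"
        using r by (simp add: L_def power_mult_distrib[symmetric] mult.commute)
      also have "L ^ s = L ^ (s - m) * L ^ m"
      proof -
        have "m \<le> s" unfolding m_def s_def using fin SP by (rule card_mono)
        then show ?thesis by (simp add: power_add[symmetric])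
      qed
      also have "L ^ m = y ^ m * ln 2 ^ m" using ln2 by (simp add: y_def power_divide)
      also have "L ^ (s - m) * (y ^ m * ln 2 ^ m) \<le> L ^ (s - m) * ((t/r) ^ s * ln 2 ^ m)"
        using key L0 ln2 by (intro mult_left_mono mult_right_mono) auto
      also have "\<dots> = (L ^ (s - m) * ln 2 ^ m) * (t/r) ^ s" by (simp only: mult_ac)
      also have "\<dots> \<le> (\<Prod>p\<in>P. ln (real p)) * (t/r) ^ s"
        unfolding split using pS pB L0 ln2 t r
        by (intro mult_right_mono mult_mono) (auto intro: prod_nonneg simp: lnp0)
      finally have "(r * ln (real s)) ^ s \<le> (\<Prod>p\<in>P. ln (real p))"
        using t r by (simp add: mult_le_cancel_right)
      also have "\<dots> \<le> C * (\<Prod>p\<in>P. ln (real p))" using C1 Pi0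
        by (simp add: mult_le_cancel_right1)
      finally show ?thesis by (simp add: s_def)
    qed
  qed
qed

theorem lemma3p2:
  "\<forall>\<epsilon>::real. \<epsilon> > 0 \<longrightarrow>
     (\<exists>C::real. C > 0 \<and>
        (\<forall>n::nat. n > 0 \<longrightarrow> omega n \<ge> 2 \<longrightarrow>
           real (num_divisors n) \<le>
             C * (((2 + \<epsilon>) * ln (real n)) / (real (omega n) * ln (real (omega n)))) ^ omega n))"
proof (intro allI impI)
  fix \<epsilon> :: real assume e: "\<epsilon> > 0"
  define r where "r = 2 / (2 + \<epsilon>)"
  have r: "0 < r" "r < 1" using e by (auto simp: r_def)
  obtain C where C: "C > 0" and HC: "\<And>P::nat set. finite P \<Longrightarrow> (\<forall>p\<in>P. prime p) \<Longrightarrow> card P \<ge> 2 \<Longrightarrow>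
     (r * ln (real (card P))) ^ card P \<le> C * (\<Prod>p\<in>P. ln (real p))"
    using lnprod_lower[OF r] by blast
  show "\<exists>C::real. C > 0 \<and>
        (\<forall>n::nat. n > 0 \<longrightarrow> omega n \<ge> 2 \<longrightarrow>
           real (num_divisors n) \<le>
             C * (((2 + \<epsilon>) * ln (real n)) / (real (omega n) * ln (real (omega n)))) ^ omega n)"
  proof (intro exI[of _ C] conjI allI impI)
    show "C > 0" by (rule C)
    fix n :: nat assume n: "n > 0" and om: "omega n \<ge> 2"
    define P where "P = prime_factors n"
    define s where "s = omega n"
    have sP: "s = card P" by (simp add: s_def P_def omega_def)
    have s2: "real s \<ge> 2" using om by (simp add: s_def)
    have fin: "finite P" by (simp add: P_def)
    have ne: "P \<noteq> {}" using om sP s_def by auto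
    have prP: "\<forall>p\<in>P. prime p" by (simp add: P_def in_prime_factors_iff)
    have lnp0: "0 \<le> ln (real p)" if "p \<in> P" for p
      using prP that prime_ge_2_nat[of p] by simp
    have mult1: "multiplicity p n \<ge> 1" if "p \<in> P" for p
      using that n by (auto simp: P_def in_prime_factors_iff prime_multiplicity_gt_zero_iff Suc_le_eq)
    define L where "L = ln (real n)"
    have L: "L = (\<Sum>p\<in>P. real (multiplicity p n) * ln (real p))"
      unfolding L_def P_def by (rule lnn[OF n])
    define D where "D = (\<Prod>p\<in>P. real (multiplicity p n + 1))"
    define Pi where "Pi = (\<Prod>p\<in>P. ln (real p))"
    have dD: "real (num_divisors n) \<le> D"
    proof -
      have "real (num_divisors n) \<le> real (\<Prod>p\<in>P. multiplicity p n + 1)"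
        unfolding P_def using divbound[OF n] by (simp only: of_nat_le_iff)
      also have "\<dots> = D" unfolding D_def by (rule of_nat_prod)
      finally show ?thesis .
    qed
    have D0: "D \<ge> 0" by (simp add: D_def prod_nonneg)
    have sumle: "(\<Sum>p\<in>P. real (multiplicity p n + 1) * ln (real p)) \<le> 2 * L"
    proof -
      have "(\<Sum>p\<in>P. real (multiplicity p n + 1) * ln (real p))
          = (\<Sum>p\<in>P. real (multiplicity p n) * ln (real p)) + (\<Sum>p\<in>P. ln (real p))"
        by (simp add: algebra_simps sum.distrib)
      also have "(\<Sum>p\<in>P. ln (real p)) \<le> (\<Sum>p\<in>P. real (multiplicity p n) * ln (real p))"
      proof (intro sum_mono)
        fix p assume p: "p \<in> P"
        show "ln (real p) \<le> real (multiplicity p n) * ln (real p)"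
          using mult1[OF p] lnp0[OF p] by (simp add: mult_le_cancel_right1)
      qed
      finally show ?thesis by (simp add: L)
    qed
    have "D * Pi = (\<Prod>p\<in>P. real (multiplicity p n + 1) * ln (real p))"
      by (simp add: D_def Pi_def prod.distrib)
    also have "\<dots> \<le> ((\<Sum>p\<in>P. real (multiplicity p n + 1) * ln (real p)) / card P) ^ card P"
      by (rule amgm[OF fin ne]) (simp add: lnp0)
    also have "\<dots> \<le> (2 * L / s) ^ s"
      unfolding sP[symmetric]
      using sumle s2 lnp0 by (intro power_mono divide_right_mono divide_nonneg_nonneg sum_nonneg mult_nonneg_nonneg) auto
    finally have DPi: "D * Pi \<le> (2 * L / s) ^ s" .
    define R where "R = (r * ln (real s)) ^ s"
    have R0: "R > 0" using r s2 by (simp add: R_def)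
    have RC: "R \<le> C * Pi" unfolding R_def Pi_def sP using HC[OF fin prP] om sP s_def by simp
    have "D * R \<le> D * (C * Pi)" using D0 RC by (simp add: mult_left_mono)
    also have "\<dots> = C * (D * Pi)" by simp
    also have "\<dots> \<le> C * (2 * L / s) ^ s" using C DPi by simp
    finally have "D * R \<le> C * (2 * L / s) ^ s" .
    then have "D \<le> C * (2 * L / s) ^ s / R" by (subst pos_le_divide_eq[OF R0])
    also have "\<dots> = C * ((2 + \<epsilon>) * L / (s * ln s)) ^ s"
    proof -
      have "(2 * L / s) / (r * ln (real s)) = (2 + \<epsilon>) * L / (s * ln s)"
        using e s2 by (simp add: r_def field_simps)
      then show ?thesis unfolding R_def times_divide_eq_right[symmetric] power_divide[symmetric]
        by (rule arg_cong[where f="\<lambda>z. C * z ^ s"])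
    qed
    finally show "real (num_divisors n) \<le>
             C * (((2 + \<epsilon>) * ln (real n)) / (real (omega n) * ln (real (omega n)))) ^ omega n"
      unfolding L_def s_def by (rule order_trans[OF dD])
  qed
qed

end
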